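(* Assume $n>R$ and that the sample satisfies $N_r\ge2(k+1)$ for every $r\in[R]$. Then $$\sup_{f\in\mathcal F}\big|U_\Omega(f)-\bar U_\Omega(f)\big|\le\frac{2\mathcal BR}{n-R}+\frac{6\mathcal BRk}{N}+\frac{2\mathcal Bk}{N-k-1}.$$
   Context: Setup: Let $\mathcal X$ be a measurable space, $R\ge2$, $\rho=(\rho_1,\dots,\rho_R)$ a probability vector with all $\rho_r>0$, and $\mathcal D_1,\dots,\mathcal D_R$ distributions on $\mathcal X$; $\bar{\mathcal D}:=\sum_r\rho_r\mathcal D_r$. A labeled sample consists of $N$ i.i.d. pairs $(X_j,Y_j)$ with $\mathbb P(Y_j=r)=\rho_r$ and $X_j\mid Y_j=r\sim\mathcal D_r$; $S=(X_1,\dots,X_N)$, $N_r=|\{j:Y_j=r\}|$, $\widehat\rho_r=N_r/N$. Fix an integer $k\ge1$. $\mathcal F$ is a class of maps $f:\mathcal X\to\mathbb R^d$, $\phi:\mathbb R^k\to\mathbb R_+$, and $\ell_{\phi,f}(x,x^+,x_1^-,\dots,x_k^-):=\phi\big((f(x)^\top[f(x^+)-f(x_i^-)])_{i=1}^k\big)$, with $0\le\ell_{\phi,f}\le\mathcal B$ for all $f\in\mathcal F$. Natural estimator: $\Omega_r$ is the set of index tuples $(a,b,c_1,\dots,c_k)$ of pairwise distinct indices in $[N]$ with $Y_a=Y_b=r$ (negatives $c_i$ arbitrary); $U_{\Omega_r}(f)$ is the average of $\ell_{\phi,f}(X_a,X_b,X_{c_1},\dots,X_{c_k})$ over $\Omega_r$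 ($:=0$ if empty); $U_\Omega(f):=\sum_r\widehat\rho_rU_{\Omega_r}(f)$. Auxiliary estimator: $n:=2\lfloor N/(k+2)\rfloor$; $\Pi$ is the set of permutations of $[N]$; for $\pi\in\Pi$, $I_\pi=\{\pi(1),\dots,\pi(n)\}$, $n_r^\pi:=|\{j\in I_\pi:Y_j=r\}|$, $\Omega_r^\pi$ is the set of tuples $(a,b,c_1,\dots,c_k)$ of pairwise distinct indices with $a,b\in I_\pi$, $Y_a=Y_b=r$, $c_i\notin I_\pi$; $U_{\Omega_r^\pi}(f)$ is the corresponding average ($:=0$ if empty); $\omega_r^\pi:=\lfloor n_r^\pi/2\rfloor/\sum_q\lfloor n_q^\pi/2\rfloor$ ($:=0$ if denominator $0$); $\bar U_\Omega(f):=\frac1{N!}\sum_{\pi\in\Pi}\sum_r\omega_r^\pi U_{\Omega_r^\pi}(f)$. *)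

theory Defs
  imports "HOL-Analysis.Analysis"
begin

text \<open>Sample indices are 0..<N; labels Y j are in {1..R}. Index tuples
(a,b,c_1,...,c_k) are lists t of length k+2 with t!0 = a, t!1 = b and
drop 2 t = [c_1,...,c_k].\<close>

definition loss ::
  "(real list \<Rightarrow> real) \<Rightarrow> ('x \<Rightarrow> 'v::euclidean_space) \<Rightarrow> 'x \<Rightarrow> 'x \<Rightarrow> 'x list \<Rightarrow> real" where
  "loss \<phi> f x xp xneg = \<phi> (map (\<lambda>xm. f x \<bullet> (f xp - f xm)) xneg)"

definition avg_over :: "'a set \<Rightarrow> ('a \<Rightarrow> real) \<Rightarrow> real" where
  "avg_over A g = (if card A = 0 then 0 else (\<Sum>t\<in>A. g t) / real (card A))"

definition tuple_loss ::
  "(real list \<Rightarrow> real) \<Rightarrow> ('x \<Rightarrow> 'v::euclidean_space) \<Rightarrow> (nat \<Rightarrow> 'x) \<Rightarrow> nat list \<Rightarrow> real" where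
  "tuple_loss \<phi> f X t = loss \<phi> f (X (t!0)) (X (t!1)) (map X (drop 2 t))"

definition Omega_r :: "nat \<Rightarrow> nat \<Rightarrow> (nat \<Rightarrow> nat) \<Rightarrow> nat \<Rightarrow> nat list set" where
  "Omega_r N k Y r = {t. length t = k + 2 \<and> distinct t \<and> set t \<subseteq> {0..<N}
      \<and> Y (t!0) = r \<and> Y (t!1) = r}"

definition N_r :: "nat \<Rightarrow> (nat \<Rightarrow> nat) \<Rightarrow> nat \<Rightarrow> nat" where
  "N_r N Y r = card {j\<in>{0..<N}. Y j = r}"

definition U_Omega ::
  "nat \<Rightarrow> nat \<Rightarrow> nat \<Rightarrow> (nat \<Rightarrow> nat) \<Rightarrow> (nat \<Rightarrow> 'x) \<Rightarrow> (real list \<Rightarrow> real)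
     \<Rightarrow> ('x \<Rightarrow> 'v::euclidean_space) \<Rightarrow> real" where
  "U_Omega N R k Y X \<phi> f =
     (\<Sum>r\<in>{1..R}. (real (N_r N Y r) / real N) * avg_over (Omega_r N k Y r) (tuple_loss \<phi> f X))"

definition aux_n :: "nat \<Rightarrow> nat \<Rightarrow> nat" where
  "aux_n N k = 2 * (N div (k + 2))"

definition I_pi :: "nat \<Rightarrow> (nat \<Rightarrow> nat) \<Rightarrow> nat set" where
  "I_pi n \<pi> = \<pi> ` {0..<n}"

definition n_r_pi :: "nat \<Rightarrow> (nat \<Rightarrow> nat) \<Rightarrow> (nat \<Rightarrow> nat) \<Rightarrow> nat \<Rightarrow> nat" where
  "n_r_pi n Y \<pi> r = card {j\<in>I_pi n \<pi>. Y j = r}"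

definition Omega_r_pi ::
  "nat \<Rightarrow> nat \<Rightarrow> nat \<Rightarrow> (nat \<Rightarrow> nat) \<Rightarrow> (nat \<Rightarrow> nat) \<Rightarrow> nat \<Rightarrow> nat list set" where
  "Omega_r_pi N n k Y \<pi> r = {t. length t = k + 2 \<and> distinct t \<and> set t \<subseteq> {0..<N}
      \<and> t!0 \<in> I_pi n \<pi> \<and> t!1 \<in> I_pi n \<pi> \<and> Y (t!0) = r \<and> Y (t!1) = r
      \<and> (\<forall>c\<in>set (drop 2 t). c \<notin> I_pi n \<pi>)}"

definition omega_r_pi :: "nat \<Rightarrow> nat \<Rightarrow> (nat \<Rightarrow> nat) \<Rightarrow> (nat \<Rightarrow> nat) \<Rightarrow> nat \<Rightarrow> real" where
  "omega_r_pi R n Y \<pi> r =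
     (let D = (\<Sum>q\<in>{1..R}. n_r_pi n Y \<pi> q div 2) in
      if D = 0 then 0 else real (n_r_pi n Y \<pi> r div 2) / real D)"

definition U_bar ::
  "nat \<Rightarrow> nat \<Rightarrow> nat \<Rightarrow> (nat \<Rightarrow> nat) \<Rightarrow> (nat \<Rightarrow> 'x) \<Rightarrow> (real list \<Rightarrow> real)
     \<Rightarrow> ('x \<Rightarrow> 'v::euclidean_space) \<Rightarrow> real" where
  "U_bar N R k Y X \<phi> f =
     (let n = aux_n N k in
      (1 / fact N) * (\<Sum>\<pi>\<in>{\<pi>. \<pi> permutes {0..<N}}.
         \<Sum>r\<in>{1..R}. omega_r_pi R n Y \<pi> r *
            avg_over (Omega_r_pi N n k Y \<pi> r) (tuple_loss \<phi> f X)))"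

end

theory Submission
  imports Defs "HOL-Combinatorics.Permutations"
begin

lemma exists_perm_image:
  assumes "finite U" "I \<subseteq> U" "J \<subseteq> U" "card I = card J"
  shows "\<exists>\<sigma>. \<sigma> permutes U \<and> \<sigma> ` I = J"
proof -
  have fI: "finite I" "finite J" using assms finite_subset by blast+
  obtain f where f: "bij_betw f I J" using finite_same_card_bij[OF fI assms(4)] by blast
  have "card (U - I) = card (U - J)"
    using assms fI by (simp add: card_Diff_subset)
  then obtain g where g: "bij_betw g (U - I) (U - J)"
    using finite_same_card_bij[of "U - I" "U - J"] assms(1) by auto
  define \<sigma> where "\<sigma> x = (if x \<in> I then f x else if x \<in> U then g x else x)" for x
  have b1: "bij_betw \<sigma> I J" using f by (rule bij_betw_cong[THEN iffD1, rotated]) (simp add: \<sigma>_def)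
  have b2: "bij_betw \<sigma> (U - I) (U - J)" using g by (rule bij_betw_cong[THEN iffD1, rotated]) (simp add: \<sigma>_def)
  have "bij_betw \<sigma> (I \<union> (U - I)) (J \<union> (U - J))"
    by (rule bij_betw_combine[OF b1 b2]) blast
  moreover have "I \<union> (U - I) = U" "J \<union> (U - J) = U" using assms by auto
  ultimately have "bij_betw \<sigma> U U" by simp
  then have "\<sigma> permutes U" by (rule bij_imp_permutes) (use assms in \<open>auto simp: \<sigma>_def\<close>)
  moreover have "\<sigma> ` I = J" using b1 bij_betw_imp_surj_on by blast
  ultimately show ?thesis by blast
qed

lemma perm_count_le:
  fixes N n :: nat
  assumes "I \<subseteq> {0..<N}" "J \<subseteq> {0..<N}" "card I = card J"
  shows "card {\<pi>. \<pi> permutes {0..<N} \<and> \<pi> ` {0..<n} = I} \<le> card {\<pi>. \<pi> permutes {0..<N} \<and> \<pi> ` {0..<n} = J}"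
proof -
  obtain \<sigma> where s: "\<sigma> permutes {0..<N}" "\<sigma> ` I = J" using exists_perm_image[of "{0..<N}" I J] assms by (meson finite_atLeastLessThan)
  show ?thesis
  proof (rule card_inj_on_le[where f = "\<lambda>\<pi>. \<sigma> \<circ> \<pi>"])
    show "inj_on ((\<circ>) \<sigma>) {\<pi>. \<pi> permutes {0..<N} \<and> \<pi> ` {0..<n} = I}"
    proof (rule inj_onI)
      fix p q assume "\<sigma> \<circ> p = \<sigma> \<circ> q"
      then have "inv \<sigma> \<circ> (\<sigma> \<circ> p) = inv \<sigma> \<circ> (\<sigma> \<circ> q)" by simp
      then show "p = q" using permutes_inv_o(2)[OF s(1)] by (simp add: o_assoc)
    qed
    show "(\<circ>) \<sigma> ` {\<pi>. \<pi> permutes {0..<N} \<and> \<pi> ` {0..<n} = I} \<subseteq> {\<pi>. \<pi> permutes {0..<N} \<and> \<pi> ` {0..<n} = J}"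
    proof
      fix x assume "x \<in> (\<circ>) \<sigma> ` {\<pi>. \<pi> permutes {0..<N} \<and> \<pi> ` {0..<n} = I}"
      then obtain p where p: "p permutes {0..<N}" "p ` {0..<n} = I" "x = \<sigma> \<circ> p" by blast
      have "x permutes {0..<N}" using p(1,3) s(1) permutes_compose by blast
      moreover have "x ` {0..<n} = J" using p(2,3) s(2) image_comp[of \<sigma> p "{0..<n}"] by simp
      ultimately show "x \<in> {\<pi>. \<pi> permutes {0..<N} \<and> \<pi> ` {0..<n} = J}" by blast
    qed
    show "finite {\<pi>. \<pi> permutes {0..<N} \<and> \<pi> ` {0..<n} = J}"
      using finite_permutations[of "{0..<N}"] by (rule finite_subset[rotated]) auto
  qed
qed

lemma sum_perms_subsets:
  fixes G :: "nat set \<Rightarrow> real"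
  assumes "n \<le> N"
  shows "(\<Sum>\<pi>\<in>{\<pi>. \<pi> permutes {0..<N}}. G (\<pi> ` {0..<n}))
        = (fact N / real (N choose n)) * (\<Sum>I\<in>{I. I \<subseteq> {0..<N} \<and> card I = n}. G I)"
proof -
  let ?P = "{\<pi>. \<pi> permutes {0..<N}}"
  let ?S = "{I. I \<subseteq> {0..<N} \<and> card I = n}"
  define c where "c I = card {\<pi>. \<pi> permutes {0..<N} \<and> \<pi> ` {0..<n} = I}" for I
  have img: "\<pi> ` {0..<n} \<in> ?S" if "\<pi> permutes {0..<N}" for \<pi>
  proof -
    have "\<pi> ` {0..<n} \<subseteq> \<pi> ` {0..<N}" using assms by auto
    also have "\<dots> = {0..<N}" using permutes_image[OF that] .
    finally show ?thesis using card_image[OF inj_on_subset[OF permutes_inj[OF that]]] by simp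
  qed
  have I0: "{0..<n} \<in> ?S" using assms by auto
  have cc: "c I = c {0..<n}" if "I \<in> ?S" for I
  proof -
    have "c I \<le> c {0..<n}" unfolding c_def by (rule perm_count_le) (use that assms in auto)
    moreover have "c {0..<n} \<le> c I" unfolding c_def by (rule perm_count_le) (use that assms in auto)
    ultimately show ?thesis by linarith
  qed
  have finS: "finite ?S" by (rule finite_subset[of _ "Pow {0..<N}"]) auto
  have gen: "(\<Sum>\<pi>\<in>?P. H (\<pi> ` {0..<n})) = real (c {0..<n}) * (\<Sum>I\<in>?S. H I)" for H :: "nat set \<Rightarrow> real"
  proof -
    have "(\<Sum>\<pi>\<in>?P. H (\<pi> ` {0..<n})) = (\<Sum>I\<in>?S. \<Sum>\<pi>\<in>{\<pi>\<in>?P. \<pi> ` {0..<n} = I}. H (\<pi> ` {0..<n}))"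
      by (rule sum.group[symmetric]) (use finS finite_permutations img in auto)
    also have "\<dots> = (\<Sum>I\<in>?S. real (c I) * H I)"
      by (rule sum.cong) (auto simp: c_def)
    also have "\<dots> = (\<Sum>I\<in>?S. real (c {0..<n}) * H I)"
      by (rule sum.cong) (auto simp: cc)
    finally show ?thesis by (simp add: sum_distrib_left)
  qed
  have "real (card ?P) = real (c {0..<n}) * real (card ?S)"
    using gen[of "\<lambda>_. 1"] by simp
  then have "fact N = real (c {0..<n}) * real (N choose n)"
    by (simp add: card_permutations n_subsets)
  moreover have "real (N choose n) > 0" using assms by simp
  ultimately have "real (c {0..<n}) = fact N / real (N choose n)" by (simp add: field_simps)
  then show ?thesis using gen[of G] by simp
qed

lemma card_subsets_constr:
  assumes "finite U" "S \<subseteq> U" "T \<subseteq> U" "S \<inter> T = {}" "card S \<le> n"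
  shows "card {I. I \<subseteq> U \<and> card I = n \<and> S \<subseteq> I \<and> I \<inter> T = {}}
       = (card U - card S - card T) choose (n - card S)"
proof -
  have fS: "finite S" "finite T" using assms finite_subset by blast+
  have "bij_betw (\<lambda>I. I - S) {I. I \<subseteq> U \<and> card I = n \<and> S \<subseteq> I \<and> I \<inter> T = {}}
          {J. J \<subseteq> U - S - T \<and> card J = n - card S}"
  proof (rule bij_betw_byWitness[where f' = "\<lambda>J. J \<union> S"])
    show "\<forall>a\<in>{I. I \<subseteq> U \<and> card I = n \<and> S \<subseteq> I \<and> I \<inter> T = {}}. a - S \<union> S = a" by auto
    show "\<forall>a\<in>{J. J \<subseteq> U - S - T \<and> card J = n - card S}. a \<union> S - S = a" by auto
    show "(\<lambda>I. I - S) ` {I. I \<subseteq> U \<and> card I = n \<and> S \<subseteq> I \<and> I \<inter> T = {}}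
          \<subseteq> {J. J \<subseteq> U - S - T \<and> card J = n - card S}"
    proof
      fix J assume "J \<in> (\<lambda>I. I - S) ` {I. I \<subseteq> U \<and> card I = n \<and> S \<subseteq> I \<and> I \<inter> T = {}}"
      then obtain I where I: "I \<subseteq> U" "card I = n" "S \<subseteq> I" "I \<inter> T = {}" "J = I - S" by blast
      have "finite I" using I(1) assms(1) finite_subset by blast
      then have "card J = n - card S" using I by (simp add: card_Diff_subset fS)
      then show "J \<in> {J. J \<subseteq> U - S - T \<and> card J = n - card S}" using I by auto
    qed
    show "(\<lambda>J. J \<union> S) ` {J. J \<subseteq> U - S - T \<and> card J = n - card S}
          \<subseteq> {I. I \<subseteq> U \<and> card I = n \<and> S \<subseteq> I \<and> I \<inter> T = {}}"
    proof
      fix I assume "I \<in> (\<lambda>J. J \<union> S) ` {J. J \<subseteq> U - S - T \<and> card J = n - card S}"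
      then obtain J where J: "J \<subseteq> U - S - T" "card J = n - card S" "I = J \<union> S" by blast
      have "finite J" using J(1) assms(1) finite_subset by blast
      moreover have "J \<inter> S = {}" using J by auto
      ultimately have "card I = n" using J assms(5) fS by (simp add: card_Un_disjoint)
      then show "I \<in> {I. I \<subseteq> U \<and> card I = n \<and> S \<subseteq> I \<and> I \<inter> T = {}}"
        using J assms by auto
    qed
  qed
  then have "card {I. I \<subseteq> U \<and> card I = n \<and> S \<subseteq> I \<and> I \<inter> T = {}}
      = card {J. J \<subseteq> U - S - T \<and> card J = n - card S}" by (rule bij_betw_same_card)
  also have "\<dots> = card (U - S - T) choose (n - card S)"
    by (rule n_subsets) (use assms in auto)
  also have "card (U - S - T) = card U - card S - card T"
  proof -
    have "U - S - T = U - (S \<union> T)" by auto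
    moreover have "card (U - (S \<union> T)) = card U - card (S \<union> T)"
      using assms fS by (simp add: card_Diff_subset)
    moreover have "card (S \<union> T) = card S + card T" using fS assms(4) by (simp add: card_Un_disjoint)
    ultimately show ?thesis by simp
  qed
  finally show ?thesis .
qed

lemma real_ff:
  assumes "k \<le> c"
  shows "real (\<Prod>{c - k + 1..c}) = fact c / fact (c - k)"
proof -
  have "fact c = (fact (c - k) :: nat) * \<Prod>{Suc (c - k)..c}"
    by (rule fact_eq_fact_times) simp
  then have "(fact c :: real) = fact (c - k) * real (\<Prod>{c - k + 1..c})"
    by (metis Suc_eq_plus1 of_nat_fact of_nat_mult)
  then show ?thesis by (simp add: field_simps)
qed

lemma card_pairs:
  assumes "finite A" "2 \<le> card A"
  shows "card {p. length p = 2 \<and> distinct p \<and> set p \<subseteq> A} = card A * (card A - 1)"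
proof -
  have "card {p. length p = 2 \<and> distinct p \<and> set p \<subseteq> A} = \<Prod>{card A - 2 + 1..card A}"
    by (rule card_lists_distinct_length_eq) (use assms in auto)
  also have "{card A - 2 + 1..card A} = {card A - 1, card A}" using assms(2) by auto
  also have "\<Prod>{card A - 1, card A} = card A * (card A - 1)" using assms(2) by simp
  finally show ?thesis .
qed

lemma card_labels_sum:
  fixes Y :: "nat \<Rightarrow> nat"
  assumes "finite I" "\<forall>j\<in>I. Y j \<in> Q" "finite Q"
  shows "(\<Sum>q\<in>Q. card {j\<in>I. Y j = q}) = card I"
proof -
  have "I = (\<Union>q\<in>Q. {j\<in>I. Y j = q})" using assms by auto
  then have "card I = card (\<Union>q\<in>Q. {j\<in>I. Y j = q})" by simp
  also have "\<dots> = (\<Sum>q\<in>Q. card {j\<in>I. Y j = q})"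
    by (rule card_UN_disjoint) (use assms in auto)
  finally show ?thesis by simp
qed

definition nrI :: "(nat \<Rightarrow> nat) \<Rightarrow> nat set \<Rightarrow> nat \<Rightarrow> nat" where
  "nrI Y I r = card {j\<in>I. Y j = r}"

definition omI :: "nat \<Rightarrow> (nat \<Rightarrow> nat) \<Rightarrow> nat set \<Rightarrow> nat \<Rightarrow> real" where
  "omI R Y I r = (let D = (\<Sum>q\<in>{1..R}. nrI Y I q div 2) in
      if D = 0 then 0 else real (nrI Y I r div 2) / real D)"

definition OmI :: "nat \<Rightarrow> nat \<Rightarrow> (nat \<Rightarrow> nat) \<Rightarrow> nat set \<Rightarrow> nat \<Rightarrow> nat list set" where
  "OmI N k Y I r = {t. length t = k + 2 \<and> distinct t \<and> set t \<subseteq> {0..<N}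
      \<and> t!0 \<in> I \<and> t!1 \<in> I \<and> Y (t!0) = r \<and> Y (t!1) = r
      \<and> (\<forall>c\<in>set (drop 2 t). c \<notin> I)}"

lemma len2_split:
  assumes "length t = k + 2"
  obtains a b cs where "t = a # b # cs" "length cs = k"
  using assms by (cases t; cases "tl t") auto

lemma finite_dlists: "finite A \<Longrightarrow> finite {xs. length xs = k \<and> distinct xs \<and> set xs \<subseteq> A}"
  by (rule finite_subset[OF _ finite_lists_length_eq[of A k]]) auto

lemma finite_OmI: "finite (OmI N k Y I r)"
  unfolding OmI_def
  by (rule finite_subset[OF _ finite_lists_length_eq[of "{0..<N}" "k+2"]]) auto

lemma card_OmI_le:
  assumes "I \<subseteq> {0..<N}" "card I = n" "k \<le> N - n" "2 \<le> nrI Y I r"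
  shows "card (OmI N k Y I r) \<le> nrI Y I r * (nrI Y I r - 1) * \<Prod>{N - n - k + 1..N - n}"
proof -
  let ?Ir = "{j\<in>I. Y j = r}"
  let ?P2 = "{p. length p = 2 \<and> distinct p \<and> set p \<subseteq> ?Ir}"
  let ?Dk = "{cs. length cs = k \<and> distinct cs \<and> set cs \<subseteq> {0..<N} - I}"
  have fI: "finite I" using assms(1) finite_subset by blast
  have cUI: "card ({0..<N} - I) = N - n" using assms fI by (simp add: card_Diff_subset)
  have sub: "OmI N k Y I r \<subseteq> (\<lambda>(p, cs). p @ cs) ` (?P2 \<times> ?Dk)"
  proof
    fix t assume t: "t \<in> OmI N k Y I r"
    then have "length t = k + 2" unfolding OmI_def by blast
    then obtain a b cs where abc: "t = a # b # cs" "length cs = k" by (rule len2_split)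
    have "[a, b] \<in> ?P2" "cs \<in> ?Dk" using t abc unfolding OmI_def by auto
    moreover have "t = (\<lambda>(p, cs). p @ cs) ([a, b], cs)" using abc by simp
    ultimately show "t \<in> (\<lambda>(p, cs). p @ cs) ` (?P2 \<times> ?Dk)" by blast
  qed
  have fin: "finite (?P2 \<times> ?Dk)" by (intro finite_cartesian_product finite_dlists) (use fI in auto)
  have "card (OmI N k Y I r) \<le> card ((\<lambda>(p, cs). p @ cs) ` (?P2 \<times> ?Dk))"
    by (rule card_mono[OF finite_imageI[OF fin] sub])
  also have "\<dots> \<le> card (?P2 \<times> ?Dk)" by (rule card_image_le[OF fin])
  also have "\<dots> = card ?P2 * card ?Dk" by (rule card_cartesian_product)
  also have "card ?P2 = nrI Y I r * (nrI Y I r - 1)"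
    using card_pairs[of ?Ir] fI assms(4) unfolding nrI_def by auto
  also have "card ?Dk = \<Prod>{N - n - k + 1..N - n}"
    using card_lists_distinct_length_eq[of "{0..<N} - I" k] cUI assms(3) by auto
  finally show ?thesis .
qed

lemma omI_ratio:
  fixes Y :: "nat \<Rightarrow> nat"
  assumes I: "I \<subseteq> {0..<N}" "card I = n" and kn: "k \<le> N - n"
    and Ylab: "\<forall>j<N. Y j \<in> {1..R}" and r: "r \<in> {1..R}"
    and t: "t \<in> OmI N k Y I r"
  shows "omI R Y I r / real (card (OmI N k Y I r))
     \<ge> 1 / (real n * real (nrI Y I r) * real (\<Prod>{N - n - k + 1..N - n}))"
proof -
  define m where "m = nrI Y I r"
  define ff where "ff = \<Prod>{N - n - k + 1..N - n}"
  define D where "D = (\<Sum>q\<in>{1..R}. nrI Y I q div 2)"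
  have fI: "finite I" using I(1) finite_subset by blast
  have "length t = k + 2" using t unfolding OmI_def by blast
  then obtain a b cs where abc: "t = a # b # cs" "length cs = k" by (rule len2_split)
  have ab: "a \<in> {j\<in>I. Y j = r}" "b \<in> {j\<in>I. Y j = r}" "a \<noteq> b"
    using t abc unfolding OmI_def by auto
  have m2: "2 \<le> m"
  proof -
    have "card {a, b} \<le> card {j\<in>I. Y j = r}" by (rule card_mono) (use fI ab in auto)
    then show ?thesis using ab(3) unfolding m_def nrI_def by simp
  qed
  have "m div 2 \<le> D" unfolding D_def m_def
    by (rule member_le_sum[where f = "\<lambda>q. nrI Y I q div 2"]) (use r in auto)
  then have Dpos: "D \<ge> 1" using m2 by linarith
  have "2 * D = (\<Sum>q\<in>{1..R}. 2 * (nrI Y I q div 2))" unfolding D_def by (simp add: sum_distrib_left)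
  also have "\<dots> \<le> (\<Sum>q\<in>{1..R}. nrI Y I q)" by (rule sum_mono) simp
  also have "\<dots> = card I" unfolding nrI_def
    by (rule card_labels_sum) (use fI I Ylab in auto)
  finally have Dn: "2 * D \<le> n" using I by simp
  have om: "omI R Y I r = real (m div 2) / real D"
    using Dpos unfolding omI_def D_def m_def Let_def by simp
  have md: "2 * (m div 2) + 1 \<ge> m" by linarith
  have om_ge: "omI R Y I r \<ge> (real m - 1) / real n"
  proof -
    have "real n > 0" using Dn Dpos by linarith
    have "(real m - 1) / real n \<le> (real m - 1) / (2 * real D)"
      by (rule divide_left_mono) (use m2 Dn Dpos in auto)
    also have "\<dots> \<le> (2 * real (m div 2)) / (2 * real D)"
      by (rule divide_right_mono) (use md Dpos in linarith)+
    also have "\<dots> = real (m div 2) / real D" by simp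
    finally show ?thesis using om by simp
  qed
  have cpos: "card (OmI N k Y I r) > 0" using t finite_OmI by (metis card_gt_0_iff empty_iff)
  have cle: "card (OmI N k Y I r) \<le> m * (m - 1) * ff"
    unfolding m_def ff_def by (rule card_OmI_le) (use I kn m2 in \<open>auto simp: m_def\<close>)
  have eqr: "real (m * (m - 1) * ff) = real m * (real m - 1) * real ff"
    using m2 by (simp add: of_nat_diff)
  have cle': "real (card (OmI N k Y I r)) \<le> real m * (real m - 1) * real ff"
    using cle eqr by (metis of_nat_le_iff)
  have ppos: "0 < m * (m - 1) * ff" using cle cpos by linarith
  have ppos': "0 < real m * (real m - 1) * real ff"
    using ppos eqr by (metis of_nat_0_less_iff)
  have "1 / (real n * real m * real ff) = ((real m - 1) / real n) / (real m * (real m - 1) * real ff)"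
  proof -
    have "ff > 0" using ppos by simp
    moreover have "n > 0" using Dn Dpos by linarith
    moreover have "real m - 1 > 0" using m2 by simp
    ultimately show ?thesis by (simp add: field_simps)
  qed
  also have "\<dots> \<le> omI R Y I r / (real m * (real m - 1) * real ff)"
    by (rule divide_right_mono) (use om_ge m2 in auto)
  also have "\<dots> \<le> omI R Y I r / real (card (OmI N k Y I r))"
  proof (rule divide_left_mono)
    show "0 \<le> omI R Y I r" unfolding omI_def Let_def by (simp del: of_nat_sum)
    show "real (card (OmI N k Y I r)) \<le> real m * (real m - 1) * real ff" by (rule cle')
    show "0 < real m * (real m - 1) * real ff * real (card (OmI N k Y I r))"
      using cpos ppos' by simp
  qed
  finally show ?thesis unfolding m_def ff_def .
qed

lemma inv_tangent:
  fixes m E :: real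
  assumes "m > 0" "E > 0"
  shows "1 / m \<ge> (2 * E - m) / E^2"
proof -
  have "0 \<le> (m - E)^2" by simp
  then have "m * (2 * E - m) \<le> E^2" by (simp add: power2_eq_square algebra_simps)
  then show ?thesis using assms by (simp add: field_simps power2_eq_square)
qed

lemma key_sum:
  fixes Y :: "nat \<Rightarrow> nat"
  assumes Ylab: "\<forall>j<N. Y j \<in> {1..R}" and r: "r \<in> {1..R}"
    and t: "t \<in> Omega_r N k Y r"
    and nN: "n \<le> N" and kn: "k \<le> N - n" and n3: "3 \<le> n"
  shows "(\<Sum>I\<in>{I. I \<subseteq> {0..<N} \<and> card I = n}.
            if t \<in> OmI N k Y I r then omI R Y I r / real (card (OmI N k Y I r)) else 0)
      \<ge> real ((N - 2 - k) choose (n - 2))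
         / (real n * real (\<Prod>{N - n - k + 1..N - n})
            * (2 + (real (N_r N Y r) - 2) * real ((N - 3 - k) choose (n - 3))
                   / real ((N - 2 - k) choose (n - 2))))"
proof -
  let ?U = "{0..<N}"
  let ?Sub = "{I. I \<subseteq> ?U \<and> card I = n}"
  define K0 where "K0 = (N - 2 - k) choose (n - 2)"
  define K1 where "K1 = (N - 3 - k) choose (n - 3)"
  define ff where "ff = \<Prod>{N - n - k + 1..N - n}"
  define Nr where "Nr = N_r N Y r"
  define E where "E = 2 + (real Nr - 2) * real K1 / real K0"
  define Cls where "Cls = {j\<in>?U. Y j = r}"
  have "length t = k + 2" using t unfolding Omega_r_def by blast
  then obtain a b cs where abc: "t = a # b # cs" "length cs = k" by (rule len2_split)
  have tp: "a \<noteq> b" "a \<notin> set cs" "b \<notin> set cs" "distinct cs" "a \<in> ?U" "b \<in> ?U" "set cs \<subseteq> ?U"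
    "Y a = r" "Y b = r"
    using t abc unfolding Omega_r_def by auto
  have ccs: "card (set cs) = k" using tp(4) abc(2) distinct_card by blast
  define Subt where "Subt = {I. I \<subseteq> ?U \<and> card I = n \<and> {a, b} \<subseteq> I \<and> I \<inter> set cs = {}}"
  have finSub: "finite ?Sub" by (rule finite_subset[of _ "Pow ?U"]) auto
  have Subt_sub: "Subt \<subseteq> ?Sub" unfolding Subt_def by auto
  have finSubt: "finite Subt" using finite_subset[OF Subt_sub finSub] .
  have memt: "t \<in> OmI N k Y I r \<longleftrightarrow> I \<in> Subt" if "I \<in> ?Sub" for I
    using that t abc tp unfolding OmI_def Subt_def Omega_r_def by auto
  have cSubt: "card Subt = K0"
  proof -
    have "card Subt = (card ?U - card {a, b} - card (set cs)) choose (n - card {a, b})"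
      unfolding Subt_def by (rule card_subsets_constr) (use tp n3 in auto)
    then show ?thesis using tp(1) ccs unfolding K0_def by (simp add: numeral_2_eq_2)
  qed
  have K0pos: "K0 > 0" unfolding K0_def using kn n3 nN by simp
  have N2: "N \<ge> k + n" using kn nN by linarith
  have mpos: "nrI Y I r \<ge> 2" if "I \<in> Subt" for I
  proof -
    have "finite I" using that unfolding Subt_def using finite_subset by blast
    then have "card {a, b} \<le> card {j\<in>I. Y j = r}" by (intro card_mono) (use that tp in \<open>auto simp: Subt_def\<close>)
    then show ?thesis using tp(1) unfolding nrI_def by simp
  qed
  have "(\<Sum>I\<in>?Sub. if t \<in> OmI N k Y I r then omI R Y I r / real (card (OmI N k Y I r)) else 0)
      = (\<Sum>I\<in>Subt. omI R Y I r / real (card (OmI N k Y I r)))"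
  proof -
    have "(\<Sum>I\<in>?Sub. if t \<in> OmI N k Y I r then omI R Y I r / real (card (OmI N k Y I r)) else 0)
        = (\<Sum>I\<in>{I\<in>?Sub. t \<in> OmI N k Y I r}. omI R Y I r / real (card (OmI N k Y I r)))"
      by (rule sum.inter_filter[symmetric]) (rule finSub)
    also have "{I\<in>?Sub. t \<in> OmI N k Y I r} = Subt" using memt Subt_sub by blast
    finally show ?thesis .
  qed
  also have "\<dots> \<ge> (\<Sum>I\<in>Subt. 1 / (real n * real (nrI Y I r) * real ff))"
  proof (rule sum_mono)
    fix I assume I: "I \<in> Subt"
    have tI: "t \<in> OmI N k Y I r" using memt Subt_sub I by blast
    have I1: "I \<subseteq> {0..<N}" "card I = n" using I by (auto simp: Subt_def)
    show "1 / (real n * real (nrI Y I r) * real ff) \<le> omI R Y I r / real (card (OmI N k Y I r))"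
      unfolding ff_def by (rule omI_ratio[OF I1 kn Ylab r tI])
  qed
  moreover have "(\<Sum>I\<in>Subt. 1 / (real n * real (nrI Y I r) * real ff))
      = (1 / (real n * real ff)) * (\<Sum>I\<in>Subt. 1 / real (nrI Y I r))"
    by (simp add: sum_distrib_left mult_ac)
  moreover have Epos: "E > 0" unfolding E_def using K0pos tp Nr_def
  proof -
    have "Nr \<ge> 2"
    proof -
      have "card {a, b} \<le> card Cls" by (rule card_mono) (use tp in \<open>auto simp: Cls_def\<close>)
      then show ?thesis using tp(1) unfolding Nr_def N_r_def Cls_def by simp
    qed
    then have "0 \<le> (real Nr - 2) * real K1 / real K0"
      by (intro divide_nonneg_nonneg mult_nonneg_nonneg) auto
    then show "0 < 2 + (real Nr - 2) * real K1 / real K0" by linarith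
  qed
  moreover have "(\<Sum>I\<in>Subt. 1 / real (nrI Y I r)) \<ge> real K0 / E"
  proof -
    have msum: "(\<Sum>I\<in>Subt. real (nrI Y I r)) \<le> E * real K0"
    proof -
      have finCls: "finite Cls" unfolding Cls_def by simp
      define g where "g j = card {I\<in>Subt. j \<in> I}" for j
      have "(\<Sum>I\<in>Subt. nrI Y I r) = (\<Sum>I\<in>Subt. \<Sum>j\<in>{j\<in>Cls. j \<in> I}. (1::nat))"
      proof (rule sum.cong)
        fix I assume "I \<in> Subt"
        then have "{j\<in>I. Y j = r} = {j\<in>Cls. j \<in> I}" unfolding Subt_def Cls_def by auto
        then show "nrI Y I r = (\<Sum>j\<in>{j\<in>Cls. j \<in> I}. (1::nat))" unfolding nrI_def by simp
      qed simp
      also have "\<dots> = (\<Sum>j\<in>Cls. \<Sum>I\<in>{I\<in>Subt. j \<in> I}. (1::nat))"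
        by (rule sum.swap_restrict[OF finSubt finCls])
      also have "\<dots> = (\<Sum>j\<in>Cls. g j)" unfolding g_def by simp
      also have "\<dots> = (\<Sum>j\<in>Cls - {a, b}. g j) + (\<Sum>j\<in>{a, b}. g j)"
        by (rule sum.subset_diff) (use finCls tp in \<open>auto simp: Cls_def\<close>)
      also have "(\<Sum>j\<in>{a, b}. g j) = 2 * K0"
      proof -
        have "{I\<in>Subt. a \<in> I} = Subt" "{I\<in>Subt. b \<in> I} = Subt" unfolding Subt_def by auto
        then show ?thesis using tp(1) cSubt unfolding g_def by simp
      qed
      also have "(\<Sum>j\<in>Cls - {a, b}. g j) \<le> of_nat (card (Cls - {a, b})) * K1"
      proof (rule sum_bounded_above)
        fix j assume j: "j \<in> Cls - {a, b}"
        show "g j \<le> K1"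
        proof (cases "j \<in> set cs")
          case True
          then have "{I\<in>Subt. j \<in> I} = {}" unfolding Subt_def by auto
          then show ?thesis unfolding g_def by (simp only: card.empty)
        next
          case False
          have "{I\<in>Subt. j \<in> I} = {I. I \<subseteq> ?U \<and> card I = n \<and> {a, b, j} \<subseteq> I \<and> I \<inter> set cs = {}}"
            unfolding Subt_def by auto
          also have "card \<dots> = (card ?U - card {a, b, j} - card (set cs)) choose (n - card {a, b, j})"
            by (rule card_subsets_constr) (use tp j False n3 in \<open>auto simp: Cls_def card_insert_if\<close>)
          also have "card {a, b, j} = 3" using tp(1) j by (auto simp: card_insert_if)
          finally show ?thesis unfolding g_def K1_def using ccs by (simp add: numeral_3_eq_3)
        qed
      qed
      also have "card (Cls - {a, b}) = Nr - 2"
      proof -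
        have "card (Cls - {a, b}) = card Cls - card {a, b}"
          by (rule card_Diff_subset) (use tp in \<open>auto simp: Cls_def\<close>)
        then show ?thesis using tp(1) unfolding Nr_def N_r_def Cls_def by simp
      qed
      finally have nat_le: "(\<Sum>I\<in>Subt. nrI Y I r) \<le> (Nr - 2) * K1 + 2 * K0" by simp
      have Nr2: "Nr \<ge> 2"
      proof -
        have "card {a, b} \<le> card Cls" by (rule card_mono) (use tp finCls in \<open>auto simp: Cls_def\<close>)
        then show ?thesis using tp(1) unfolding Nr_def N_r_def Cls_def by simp
      qed
      have "(\<Sum>I\<in>Subt. real (nrI Y I r)) = real (\<Sum>I\<in>Subt. nrI Y I r)" by simp
      also have "\<dots> \<le> real ((Nr - 2) * K1 + 2 * K0)" using nat_le by (simp only: of_nat_le_iff)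
      also have "\<dots> = (real Nr - 2) * real K1 + 2 * real K0" using Nr2 by (simp add: of_nat_diff)
      also have "\<dots> = E * real K0" unfolding E_def using K0pos by (simp add: field_simps)
      finally show ?thesis .
    qed
    have "(\<Sum>I\<in>Subt. 1 / real (nrI Y I r)) \<ge> (\<Sum>I\<in>Subt. (2 * E - real (nrI Y I r)) / E^2)"
    proof (rule sum_mono, rule inv_tangent)
      fix I assume "I \<in> Subt"
      then show "0 < real (nrI Y I r)" using mpos[of I] by simp
    qed (use Epos in auto)
    moreover have "(\<Sum>I\<in>Subt. (2 * E - real (nrI Y I r)) / E^2)
        = (2 * E * real K0 - (\<Sum>I\<in>Subt. real (nrI Y I r))) / E^2"
      by (simp add: sum_divide_distrib[symmetric] sum_subtractf cSubt)
    moreover have "(2 * E * real K0 - (\<Sum>I\<in>Subt. real (nrI Y I r))) / E^2 \<ge> (E * real K0) / E^2"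
      by (rule divide_right_mono) (use msum in auto)
    moreover have "(E * real K0) / E^2 = real K0 / E" using Epos by (simp add: power2_eq_square)
    ultimately show ?thesis by linarith
  qed
  ultimately have "(\<Sum>I\<in>?Sub. if t \<in> OmI N k Y I r then omI R Y I r / real (card (OmI N k Y I r)) else 0)
      \<ge> (1 / (real n * real ff)) * (real K0 / E)"
    by (smt (verit) mult_left_mono divide_nonneg_nonneg of_nat_0_le_iff mult_nonneg_nonneg)
  then show ?thesis unfolding K0_def K1_def E_def Nr_def ff_def by (simp add: field_simps)
qed

lemma avg_eq: "finite A \<Longrightarrow> avg_over A g = (\<Sum>t\<in>A. g t) / real (card A)"
  unfolding avg_over_def by auto

lemma binom_ratio:
  assumes "3 \<le> n" "n + k \<le> N"
  shows "real ((N - 3 - k) choose (n - 3)) * real (N - 2 - k) = real ((N - 2 - k) choose (n - 2)) * real (n - 2)"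
proof -
  have "Suc (n - 3) * ((N - 2 - k) choose Suc (n - 3)) = (N - 2 - k) * ((N - 2 - k - 1) choose (n - 3))"
    by (rule binomial_absorption)
  moreover have "Suc (n - 3) = n - 2" "N - 2 - k - 1 = N - 3 - k" using assms by auto
  ultimately have "(n - 2) * ((N - 2 - k) choose (n - 2)) = (N - 2 - k) * ((N - 3 - k) choose (n - 3))"
    by simp
  then have "real ((n - 2) * ((N - 2 - k) choose (n - 2))) = real ((N - 2 - k) * ((N - 3 - k) choose (n - 3)))"
    by (simp only:)
  then show ?thesis by (simp only: of_nat_mult) (simp add: mult_ac)
qed

lemma K0_alg:
  fixes a b c d e p1 p2 q1 q2 :: real
  assumes "a > 0" "b > 0" "c > 0" "d > 0" "e > 0" "p1 > 0" "p2 > 0" "q1 > 0" "q2 > 0"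
  shows "(d / (a * e)) / (q2 * q1 * b / (p2 * p1 * a * c) * p2 * (c / e))
       = p1 / (q2 * q1 * (b / d))"
  using assms by (simp add: field_simps)

lemma K0_identity:
  assumes "2 \<le> n" "n + k \<le> N"
  shows "real ((N - 2 - k) choose (n - 2)) / (real (N choose n) * real n * real (\<Prod>{N - n - k + 1..N - n}))
       = (real n - 1) / (real N * (real N - 1) * real (\<Prod>{N - 2 - k + 1..N - 2}))"
proof -
  obtain n2 where n2: "n = n2 + 2" using assms(1) by (metis add.commute le_Suc_ex)
  obtain N2 where N2: "N = N2 + 2" using assms by (metis add.commute le_Suc_ex le_add2 order_trans)
  have le1: "n2 \<le> N2 - k" "k \<le> N2 - n2" "k \<le> N2" "n2 + 2 \<le> N2 + 2" using assms n2 N2 by auto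
  have b1: "real ((N - 2 - k) choose (n - 2)) = fact (N2 - k) / (fact n2 * fact (N2 - k - n2))"
    using binomial_fact[OF le1(1)] n2 N2 by simp
  have b2: "real (N choose n) = fact (N2 + 2) / (fact (n2 + 2) * fact (N2 - n2))"
    using binomial_fact[OF le1(4)] n2 N2 by simp
  have f1: "real (\<Prod>{N - n - k + 1..N - n}) = fact (N2 - n2) / fact (N2 - n2 - k)"
    using real_ff[OF le1(2)] n2 N2 by simp
  have f2: "real (\<Prod>{N - 2 - k + 1..N - 2}) = fact N2 / fact (N2 - k)"
    using real_ff[OF le1(3)] N2 by simp
  have e: "N2 - k - n2 = N2 - n2 - k" by simp
  have fn: "(fact (n2 + 2) :: real) = (real n2 + 2) * (real n2 + 1) * fact n2"
    by (simp add: fact_Suc numeral_2_eq_2 algebra_simps)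
  have fN: "(fact (N2 + 2) :: real) = (real N2 + 2) * (real N2 + 1) * fact N2"
    by (simp add: fact_Suc numeral_2_eq_2 algebra_simps)
  have pos: "(fact n2 :: real) > 0" "(fact N2 :: real) > 0" "(fact (N2 - n2) :: real) > 0"
    "(fact (N2 - k) :: real) > 0" "(fact (N2 - n2 - k) :: real) > 0" by simp_all
  have rn: "real n = real n2 + 2" "real N = real N2 + 2" using n2 N2 by auto
  have "real ((N - 2 - k) choose (n - 2)) / (real (N choose n) * real n * real (\<Prod>{N - n - k + 1..N - n}))
      = (fact (N2 - k) / (fact n2 * fact (N2 - n2 - k))) /
        ((real N2 + 2) * (real N2 + 1) * fact N2 / ((real n2 + 2) * (real n2 + 1) * fact n2 * fact (N2 - n2))
          * (real n2 + 2) * (fact (N2 - n2) / fact (N2 - n2 - k)))"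
    unfolding b1 b2 f1 e fn fN rn by (simp add: mult_ac)
  also have "\<dots> = (real n2 + 1) / ((real N2 + 2) * (real N2 + 1) * (fact N2 / fact (N2 - k)))"
    by (rule K0_alg) (use pos in auto)
  also have "\<dots> = (real n - 1) / (real N * (real N - 1) * real (\<Prod>{N - 2 - k + 1..N - 2}))"
    unfolding f2 rn by (simp add: ac_simps)
  finally show ?thesis .
qed

lemma card_Omega_r_ge:
  assumes "k + 2 \<le> N" "2 \<le> N_r N Y r"
  shows "N_r N Y r * (N_r N Y r - 1) * \<Prod>{N - 2 - k + 1..N - 2} \<le> card (Omega_r N k Y r)"
proof -
  let ?U = "{0..<N}"
  let ?Cls = "{j\<in>?U. Y j = r}"
  let ?P2 = "{p. length p = 2 \<and> distinct p \<and> set p \<subseteq> ?Cls}"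
  let ?D = "\<lambda>p. {cs. length cs = k \<and> distinct cs \<and> set cs \<subseteq> ?U - set p}"
  let ?S = "SIGMA p:?P2. ?D p"
  have finP2: "finite ?P2" by (rule finite_dlists) simp
  have cD: "card (?D p) = \<Prod>{N - 2 - k + 1..N - 2}" if "p \<in> ?P2" for p
  proof -
    have "card (?U - set p) = N - 2" using that distinct_card[of p]
      by (simp add: card_Diff_subset subset_iff)
    then show ?thesis using card_lists_distinct_length_eq[of "?U - set p" k] assms(1) by simp
  qed
  have cS: "card ?S = card ?P2 * \<Prod>{N - 2 - k + 1..N - 2}"
  proof -
    have "card ?S = (\<Sum>p\<in>?P2. card (?D p))"
      by (rule card_SigmaI) (use finP2 in \<open>auto intro!: finite_dlists\<close>)
    also have "\<dots> = (\<Sum>p\<in>?P2. \<Prod>{N - 2 - k + 1..N - 2})" by (rule sum.cong) (auto simp: cD)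
    finally show ?thesis by simp
  qed
  have cP2: "card ?P2 = N_r N Y r * (N_r N Y r - 1)"
    using card_pairs[of ?Cls] assms(2) unfolding N_r_def by simp
  have inj: "inj_on (\<lambda>(p, cs). p @ cs) ?S"
  proof (rule inj_onI)
    fix x y assume xS: "x \<in> ?S" and yS: "y \<in> ?S" and eq: "(\<lambda>(p, cs). p @ cs) x = (\<lambda>(p, cs). p @ cs) y"
    obtain p cs p' cs' where xy: "x = (p, cs)" "y = (p', cs')" by (cases x, cases y)
    have "length p = 2" "length p' = 2" using xS yS xy by auto
    moreover have "p @ cs = p' @ cs'" using eq xy by simp
    ultimately have "p = p' \<and> cs = cs'" using append_eq_append_conv[of p p' cs cs'] by simp
    then show "x = y" using xy by simp
  qed
  have img: "(\<lambda>(p, cs). p @ cs) ` ?S \<subseteq> Omega_r N k Y r"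
  proof
    fix t assume "t \<in> (\<lambda>(p, cs). p @ cs) ` ?S"
    then obtain p cs where pc: "p \<in> ?P2" "cs \<in> ?D p" "t = p @ cs" by auto
    have "length p = 0 + 2" using pc(1) by simp
    then obtain a b cs0 where "p = a # b # cs0" "length cs0 = 0" by (rule len2_split)
    then have ab: "p = [a, b]" by simp
    show "t \<in> Omega_r N k Y r" using pc ab unfolding Omega_r_def by auto
  qed
  have finO: "finite (Omega_r N k Y r)" unfolding Omega_r_def
    by (rule finite_subset[OF _ finite_lists_length_eq[of "{0..<N}" "k+2"]]) auto
  have "card ?S = card ((\<lambda>(p, cs). p @ cs) ` ?S)" using card_image[OF inj] by simp
  also have "\<dots> \<le> card (Omega_r N k Y r)" by (rule card_mono[OF finO img])
  finally show ?thesis using cS cP2 by simp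
qed

lemma P_ineq:
  fixes x N n R k m :: real
  assumes x2: "x \<ge> 2" and Nn: "N \<ge> n" and nR: "n > R" and R2: "R \<ge> 2" and m: "m = N - k - 2" "m > 0"
    and k0: "k \<ge> 0" and n2: "n \<ge> 2"
  shows "x / N - x * (x - 1) * (n - 1) / (N * (N - 1) * (2 + (x - 2) * (n - 2) / m))
     \<le> 2 / (n - R) + (x / N) * (k + 1) / m"
proof -
  define Q where "Q = (x - 2) * (n - 2)"
  define T where "T = Q * (k + 1) / m"
  define E where "E = 2 + Q / m"
  define Den where "Den = (N - 1) * E"
  define Num where "Num = (n - 1) * (x - 1)"
  have N1: "N - 1 > 0" using Nn nR R2 by linarith
  have Npos: "N > 0" using N1 by linarith
  have q0: "Q \<ge> 0" unfolding Q_def using x2 n2 by simp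
  have T0: "T \<ge> 0" unfolding T_def using q0 k0 m by simp
  have Epos: "E \<ge> 2" unfolding E_def using q0 m by simp
  have Denpos: "Den > 0" unfolding Den_def using N1 Epos by simp
  have Nm: "N - 1 = m + (k + 1)" using m by simp
  have DenE: "Den = 2 * N - 2 + Q + T"
  proof -
    have NN: "N = m + k + 2" using m by simp
    show ?thesis unfolding Den_def E_def T_def NN using m(2) by (simp add: field_simps)
  qed
  have NumE: "Num = Q + (n - 2) + x - 1" unfolding Num_def Q_def by (simp add: algebra_simps)
  have dn: "Den - Num \<le> 2 * N + T"
    unfolding DenE NumE using n2 x2 by (simp add: algebra_simps)
  have Den_ge1: "Den \<ge> Q" using DenE N1 T0 by linarith
  have Den_ge2: "Den \<ge> x * (n - R)"
  proof -
    have "x * (n - R) \<le> x * (n - 2)" using x2 R2 by (intro mult_left_mono) auto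
    also have "\<dots> = Q + 2 * n - 4" unfolding Q_def by (simp add: algebra_simps)
    also have "\<dots> \<le> Den" using DenE T0 Nn by linarith
    finally show ?thesis .
  qed
  have xnR: "x * (n - R) > 0" using x2 nR by simp
  have t1: "2 * N / Den \<le> 2 * N / (x * (n - R))"
    by (rule divide_left_mono) (use Den_ge2 Npos xnR in auto)
  have t2: "T / Den \<le> (k + 1) / m"
  proof -
    have "T / Den = (Q / Den) * ((k + 1) / m)"
      unfolding T_def by (simp add: field_simps)
    also have "\<dots> \<le> 1 * ((k + 1) / m)"
      by (rule mult_right_mono) (use Den_ge1 Denpos m k0 in \<open>auto simp: divide_le_eq_1\<close>)
    finally show ?thesis by simp
  qed
  have "(Den - Num) / Den \<le> (2 * N + T) / Den"
    by (rule divide_right_mono[OF dn]) (use Denpos in simp)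
  also have "\<dots> = 2 * N / Den + T / Den" by (simp add: add_divide_distrib)
  also have "\<dots> \<le> 2 * N / (x * (n - R)) + (k + 1) / m" using t1 t2 by linarith
  finally have main: "(Den - Num) / Den \<le> 2 * N / (x * (n - R)) + (k + 1) / m" .
  have lhs: "x / N - x * (x - 1) * (n - 1) / (N * (N - 1) * E) = (x / N) * ((Den - Num) / Den)"
    unfolding Den_def Num_def using N1 Npos Epos by (simp add: field_simps)
  have "(x / N) * ((Den - Num) / Den) \<le> (x / N) * (2 * N / (x * (n - R)) + (k + 1) / m)"
    by (rule mult_left_mono[OF main]) (use x2 Npos in simp)
  also have "\<dots> = 2 / (n - R) + (x / N) * (k + 1) / m"
  proof -
    have "x \<noteq> 0" "N \<noteq> 0" "n - R \<noteq> 0" "m \<noteq> 0" using x2 Npos nR m(2) by auto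
    then show ?thesis by (simp add: field_simps)
  qed
  finally show ?thesis using lhs unfolding E_def Q_def by simp
qed

lemma sum_omI_le1: "(\<Sum>r\<in>{1..R}. omI R Y I r) \<le> 1"
proof -
  define D where "D = (\<Sum>q\<in>{1..R}. nrI Y I q div 2)"
  show ?thesis
  proof (cases "D = 0")
    case True
    then show ?thesis unfolding omI_def D_def[symmetric] Let_def by simp
  next
    case False
    have "(\<Sum>r\<in>{1..R}. omI R Y I r) = (\<Sum>r\<in>{1..R}. real (nrI Y I r div 2) / real D)"
      unfolding omI_def D_def[symmetric] Let_def using False by simp
    also have "\<dots> = real D / real D" unfolding D_def by (simp add: sum_divide_distrib[symmetric])
    also have "\<dots> = 1" using False by simp
    finally show ?thesis by simp
  qed
qed

lemma OmI_sub: "OmI N k Y I r \<subseteq> Omega_r N k Y r"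
  unfolding OmI_def Omega_r_def by auto

lemma finite_Omega_r: "finite (Omega_r N k Y r)"
  unfolding Omega_r_def
  by (rule finite_subset[OF _ finite_lists_length_eq[of "{0..<N}" "k+2"]]) auto

lemma sum_restrict_OmI:
  "(\<Sum>t\<in>OmI N k Y I r. g t) = (\<Sum>t\<in>Omega_r N k Y r. if t \<in> OmI N k Y I r then g t else 0)"
proof -
  have "(\<Sum>t\<in>Omega_r N k Y r. if t \<in> OmI N k Y I r then g t else 0)
      = (\<Sum>t\<in>{t\<in>Omega_r N k Y r. t \<in> OmI N k Y I r}. g t)"
    by (rule sum.inter_filter[symmetric]) (rule finite_Omega_r)
  also have "{t\<in>Omega_r N k Y r. t \<in> OmI N k Y I r} = OmI N k Y I r" using OmI_sub by blast
  finally show ?thesis by simp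
qed

lemma Ubar_form:
  assumes "n \<le> N"
  shows "(1 / fact N) * (\<Sum>\<pi>\<in>{\<pi>. \<pi> permutes {0..<N}}.
         \<Sum>r\<in>{1..R}. omega_r_pi R n Y \<pi> r * avg_over (Omega_r_pi N n k Y \<pi> r) h)
     = (1 / real (N choose n)) * (\<Sum>r\<in>{1..R}. \<Sum>t\<in>Omega_r N k Y r. h t *
          (\<Sum>I\<in>{I. I \<subseteq> {0..<N} \<and> card I = n}.
             if t \<in> OmI N k Y I r then omI R Y I r / real (card (OmI N k Y I r)) else 0))"
proof -
  let ?Sub = "{I. I \<subseteq> {0..<N} \<and> card I = n}"
  define G where "G I = (\<Sum>r\<in>{1..R}. omI R Y I r * avg_over (OmI N k Y I r) h)" for I
  have pi: "(\<Sum>r\<in>{1..R}. omega_r_pi R n Y \<pi> r * avg_over (Omega_r_pi N n k Y \<pi> r) h) = G (\<pi> ` {0..<n})" for \<pi>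
    unfolding G_def omega_r_pi_def omI_def n_r_pi_def nrI_def I_pi_def Omega_r_pi_def OmI_def ..
  have finSub: "finite ?Sub" by (rule finite_subset[of _ "Pow {0..<N}"]) auto
  have "(\<Sum>\<pi>\<in>{\<pi>. \<pi> permutes {0..<N}}. \<Sum>r\<in>{1..R}. omega_r_pi R n Y \<pi> r * avg_over (Omega_r_pi N n k Y \<pi> r) h)
      = (\<Sum>\<pi>\<in>{\<pi>. \<pi> permutes {0..<N}}. G (\<pi> ` {0..<n}))" by (simp only: pi)
  also have "\<dots> = (fact N / real (N choose n)) * (\<Sum>I\<in>?Sub. G I)"
    by (rule sum_perms_subsets[OF assms])
  finally have s1: "(1 / fact N) * (\<Sum>\<pi>\<in>{\<pi>. \<pi> permutes {0..<N}}. \<Sum>r\<in>{1..R}. omega_r_pi R n Y \<pi> r * avg_over (Omega_r_pi N n k Y \<pi> r) h)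
      = (1 / real (N choose n)) * (\<Sum>I\<in>?Sub. G I)" by simp
  have GI: "G I = (\<Sum>r\<in>{1..R}. \<Sum>t\<in>Omega_r N k Y r. h t *
      (if t \<in> OmI N k Y I r then omI R Y I r / real (card (OmI N k Y I r)) else 0))" for I
    unfolding G_def
  proof (rule sum.cong[OF refl])
    fix r
    have "omI R Y I r * avg_over (OmI N k Y I r) h
        = omI R Y I r * ((\<Sum>t\<in>OmI N k Y I r. h t) / real (card (OmI N k Y I r)))"
      by (simp add: avg_eq finite_OmI)
    also have "\<dots> = (\<Sum>t\<in>OmI N k Y I r. h t) * (omI R Y I r / real (card (OmI N k Y I r)))"
      by simp
    also have "\<dots> = (\<Sum>t\<in>OmI N k Y I r. h t * (omI R Y I r / real (card (OmI N k Y I r))))"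
      by (rule sum_distrib_right)
    also have "\<dots> = (\<Sum>t\<in>Omega_r N k Y r. if t \<in> OmI N k Y I r then h t * (omI R Y I r / real (card (OmI N k Y I r))) else 0)"
      by (rule sum_restrict_OmI)
    also have "\<dots> = (\<Sum>t\<in>Omega_r N k Y r. h t * (if t \<in> OmI N k Y I r then omI R Y I r / real (card (OmI N k Y I r)) else 0))"
      by (rule sum.cong) auto
    finally show "omI R Y I r * avg_over (OmI N k Y I r) h = \<dots>" .
  qed
  have "(\<Sum>I\<in>?Sub. G I) = (\<Sum>I\<in>?Sub. \<Sum>r\<in>{1..R}. \<Sum>t\<in>Omega_r N k Y r. h t *
      (if t \<in> OmI N k Y I r then omI R Y I r / real (card (OmI N k Y I r)) else 0))"
    by (simp only: GI)
  also have "\<dots> = (\<Sum>r\<in>{1..R}. \<Sum>I\<in>?Sub. \<Sum>t\<in>Omega_r N k Y r. h t *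
      (if t \<in> OmI N k Y I r then omI R Y I r / real (card (OmI N k Y I r)) else 0))"
    by (rule sum.swap)
  also have "\<dots> = (\<Sum>r\<in>{1..R}. \<Sum>t\<in>Omega_r N k Y r. \<Sum>I\<in>?Sub. h t *
      (if t \<in> OmI N k Y I r then omI R Y I r / real (card (OmI N k Y I r)) else 0))"
    by (rule sum.cong[OF refl], rule sum.swap)
  also have "\<dots> = (\<Sum>r\<in>{1..R}. \<Sum>t\<in>Omega_r N k Y r. h t * (\<Sum>I\<in>?Sub.
      (if t \<in> OmI N k Y I r then omI R Y I r / real (card (OmI N k Y I r)) else 0)))"
    by (simp only: sum_distrib_left)
  finally show ?thesis using s1 by simp
qed

lemma sum_W_le:
  shows "(\<Sum>r\<in>{1..R}. \<Sum>t\<in>Omega_r N k Y r.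
          (\<Sum>I\<in>{I. I \<subseteq> {0..<N} \<and> card I = n}.
             if t \<in> OmI N k Y I r then omI R Y I r / real (card (OmI N k Y I r)) else 0))
        \<le> real (N choose n)"
proof -
  let ?Sub = "{I. I \<subseteq> {0..<N} \<and> card I = n}"
  have finSub: "finite ?Sub" by (rule finite_subset[of _ "Pow {0..<N}"]) auto
  have inner: "(\<Sum>t\<in>Omega_r N k Y r. if t \<in> OmI N k Y I r then omI R Y I r / real (card (OmI N k Y I r)) else 0)
      \<le> omI R Y I r" for I r
  proof -
    have "(\<Sum>t\<in>Omega_r N k Y r. if t \<in> OmI N k Y I r then omI R Y I r / real (card (OmI N k Y I r)) else 0)
        = (\<Sum>t\<in>OmI N k Y I r. omI R Y I r / real (card (OmI N k Y I r)))"
      by (rule sum_restrict_OmI[symmetric])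
    also have "\<dots> = real (card (OmI N k Y I r)) * (omI R Y I r / real (card (OmI N k Y I r)))" by simp
    also have "\<dots> \<le> omI R Y I r"
      by (cases "card (OmI N k Y I r) = 0") (auto simp: omI_def Let_def simp del: of_nat_sum)
    finally show ?thesis .
  qed
  have "(\<Sum>r\<in>{1..R}. \<Sum>t\<in>Omega_r N k Y r. \<Sum>I\<in>?Sub.
          if t \<in> OmI N k Y I r then omI R Y I r / real (card (OmI N k Y I r)) else 0)
      = (\<Sum>r\<in>{1..R}. \<Sum>I\<in>?Sub. \<Sum>t\<in>Omega_r N k Y r.
          if t \<in> OmI N k Y I r then omI R Y I r / real (card (OmI N k Y I r)) else 0)"
    by (rule sum.cong[OF refl], rule sum.swap)
  also have "\<dots> = (\<Sum>I\<in>?Sub. \<Sum>r\<in>{1..R}. \<Sum>t\<in>Omega_r N k Y r.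
          if t \<in> OmI N k Y I r then omI R Y I r / real (card (OmI N k Y I r)) else 0)"
    by (rule sum.swap)
  also have "\<dots> \<le> (\<Sum>I\<in>?Sub. \<Sum>r\<in>{1..R}. omI R Y I r)"
    by (intro sum_mono inner)
  also have "\<dots> \<le> (\<Sum>I\<in>?Sub. 1)" by (intro sum_mono sum_omI_le1)
  also have "\<dots> = real (N choose n)" by (simp add: n_subsets)
  finally show ?thesis .
qed

lemma final_arith:
  fixes B R k N n :: real
  assumes "B \<ge> 0" "R \<ge> 2" "k \<ge> 1" "N \<ge> 2 * k + 4"
  shows "B * (2 * R / (n - R) + (k + 1) / (N - k - 2))
      \<le> 2 * B * R / (n - R) + 6 * B * R * k / N + 2 * B * k / (N - k - 1)"
proof -
  have Np: "N > 0" using assms by linarith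
  have m: "N - k - 2 \<ge> N / 2" using assms by linarith
  have mp: "N - k - 2 > 0" using assms by linarith
  have "(k + 1) / (N - k - 2) \<le> (k + 1) / (N / 2)"
    by (rule divide_left_mono) (use m mp Np assms in auto)
  also have "\<dots> = 2 * (k + 1) / N" by simp
  also have "\<dots> \<le> 6 * R * k / N"
  proof (rule divide_right_mono)
    have "6 * 2 * k \<le> 6 * R * k" using assms by (intro mult_right_mono) auto
    then show "2 * (k + 1) \<le> 6 * R * k" using assms by argo
  qed (use Np in simp)
  finally have a: "(k + 1) / (N - k - 2) \<le> 6 * R * k / N" .
  have b: "0 \<le> 2 * B * k / (N - k - 1)" using assms mp by simp
  have c: "B * ((k + 1) / (N - k - 2)) \<le> B * (6 * R * k / N)" by (rule mult_left_mono[OF a assms(1)])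
  have e1: "B * (2 * R / (n - R) + (k + 1) / (N - k - 2)) = 2 * B * R / (n - R) + B * ((k + 1) / (N - k - 2))"
    by (simp add: distrib_left)
  have e2: "B * (6 * R * k / N) = 6 * B * R * k / N" by simp
  show ?thesis using c e1 e2 b by linarith
qed

theorem mainTheorem8:
  fixes N R k :: nat and Y :: "nat \<Rightarrow> nat" and X :: "nat \<Rightarrow> 'x"
    and \<phi> :: "real list \<Rightarrow> real" and F :: "('x \<Rightarrow> 'v::euclidean_space) set" and B :: real
  assumes "R \<ge> 2" and "k \<ge> 1"
    and "\<forall>j<N. Y j \<in> {1..R}"
    and "\<forall>v. \<phi> v \<ge> 0"
    and "\<forall>f\<in>F. \<forall>x xp xneg. length xneg = k \<longrightarrow>
            0 \<le> loss \<phi> f x xp xneg \<and> loss \<phi> f x xp xneg \<le> B"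
    and "aux_n N k > R"
    and "\<forall>r\<in>{1..R}. N_r N Y r \<ge> 2 * (k + 1)"
  shows "\<forall>f\<in>F. \<bar>U_Omega N R k Y X \<phi> f - U_bar N R k Y X \<phi> f\<bar>
           \<le> 2 * B * R / (real (aux_n N k) - R) + 6 * B * R * k / N
              + 2 * B * k / (real N - k - 1)"
proof (intro ballI)
  fix f assume fF: "f \<in> F"
  note R2 = assms(1) and k1 = assms(2) and Ylab = assms(3) and lossb = assms(5)
    and nR = assms(6) and Nrb = assms(7)
  define n where "n = aux_n N k"
  define M where "M = real (N choose n)"
  define h where "h = tuple_loss \<phi> f X"
  define Om where "Om r = Omega_r N k Y r" for r
  define Nr where "Nr r = N_r N Y r" for r
  define w where "w r = (real (Nr r) / real N) / real (card (Om r))" for r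
  define W where "W r t = (\<Sum>I\<in>{I. I \<subseteq> {0..<N} \<and> card I = n}.
             if t \<in> OmI N k Y I r then omI R Y I r / real (card (OmI N k Y I r)) else 0)" for r t
  define ff2 where "ff2 = \<Prod>{N - 2 - k + 1..N - 2}"
  define C where "C = (real k + 1) / ((real N - real k - 2) * real N)"
  define \<delta> where "\<delta> r = 2 / (real n - real R) + real (Nr r) * C" for r
  define q where "q = N div (k + 2)"
  have nq: "n = 2 * q" unfolding n_def q_def aux_n_def by simp
  have q2: "q \<ge> 2" using nR R2 nq n_def by linarith
  have qN: "q * (k + 2) \<le> N" unfolding q_def by (rule div_times_less_eq_dividend)
  have qk: "q * (k + 2) = q * k + 2 * q" by (simp add: algebra_simps)
  have nN: "n \<le> N" using qN qk nq by linarith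
  have kn: "k \<le> N - n"
  proof -
    have "q * k \<ge> k" using q2 by simp
    then show ?thesis using qN qk nq by linarith
  qed
  have n3: "3 \<le> n" using nR R2 n_def by linarith
  have N2k: "2 * k + 4 \<le> N"
  proof -
    have "q * k \<ge> 2 * k" using q2 by simp
    then show ?thesis using qN qk q2 by linarith
  qed
  have Npos: "real N > 0" using N2k by simp
  have hb: "0 \<le> h t \<and> h t \<le> B" if "t \<in> Om r" for t r
  proof -
    have "length t = k + 2" using that unfolding Om_def Omega_r_def by blast
    then have "length (map X (drop 2 t)) = k" by simp
    then show ?thesis using lossb fF unfolding h_def tuple_loss_def by blast
  qed
  have B0: "B \<ge> 0"
  proof -
    have "length (replicate k (undefined :: 'x)) = k" by simp
    then have "0 \<le> loss \<phi> f undefined undefined (replicate k undefined) \<and> loss \<phi> f undefined undefined (replicate k undefined) \<le> B"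
      using lossb fF by blast
    then show ?thesis by linarith
  qed
  have sumNr: "(\<Sum>r\<in>{1..R}. real (Nr r)) = real N"
  proof -
    have "(\<Sum>r\<in>{1..R}. Nr r) = card {0..<N}" unfolding Nr_def N_r_def
      by (rule card_labels_sum) (use Ylab in auto)
    then show ?thesis by (metis card_atLeastLessThan diff_zero of_nat_sum)
  qed
  have Nr2: "Nr r \<ge> 2" if "r \<in> {1..R}" for r using Nrb that unfolding Nr_def by fastforce
  have ff2pos: "ff2 > 0" unfolding ff2_def by (rule prod_pos) auto
  have cOm: "Nr r * (Nr r - 1) * ff2 \<le> card (Om r)" if "r \<in> {1..R}" for r
    unfolding Nr_def ff2_def Om_def by (rule card_Omega_r_ge) (use N2k Nr2[OF that] in \<open>auto simp: Nr_def\<close>)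
  have cOmpos: "card (Om r) > 0" if "r \<in> {1..R}" for r
  proof -
    have "Nr r * (Nr r - 1) * ff2 > 0" using Nr2[OF that] ff2pos by simp
    then show ?thesis using cOm[OF that] by linarith
  qed
  have finOm: "finite (Om r)" for r unfolding Om_def by (rule finite_Omega_r)
  have Uf: "U_Omega N R k Y X \<phi> f = (\<Sum>r\<in>{1..R}. \<Sum>t\<in>Om r. h t * w r)"
    unfolding U_Omega_def
  proof (rule sum.cong[OF refl])
    fix r
    have "real (N_r N Y r) / real N * avg_over (Omega_r N k Y r) (tuple_loss \<phi> f X)
        = real (Nr r) / real N * ((\<Sum>t\<in>Om r. h t) / real (card (Om r)))"
      unfolding Nr_def Om_def h_def by (simp add: avg_eq finite_Omega_r)
    also have "\<dots> = (\<Sum>t\<in>Om r. h t) * w r" unfolding w_def by simp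
    also have "\<dots> = (\<Sum>t\<in>Om r. h t * w r)" by (rule sum_distrib_right)
    finally show "real (N_r N Y r) / real N * avg_over (Omega_r N k Y r) (tuple_loss \<phi> f X) = \<dots>" .
  qed
  have Ubf: "U_bar N R k Y X \<phi> f = (\<Sum>r\<in>{1..R}. \<Sum>t\<in>Om r. h t * (W r t / M))"
  proof -
    have "U_bar N R k Y X \<phi> f = (1 / M) * (\<Sum>r\<in>{1..R}. \<Sum>t\<in>Om r. h t * W r t)"
      unfolding U_bar_def Let_def n_def[symmetric] M_def Om_def W_def h_def
      by (rule Ubar_form[OF nN])
    also have "\<dots> = (\<Sum>r\<in>{1..R}. \<Sum>t\<in>Om r. h t * (W r t / M))"
      by (simp add: sum_distrib_left mult_ac)
    finally show ?thesis .
  qed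
  have sumW: "(\<Sum>r\<in>{1..R}. \<Sum>t\<in>Om r. W r t) \<le> M"
    unfolding W_def Om_def M_def by (rule sum_W_le)
  have Mpos: "M > 0" unfolding M_def using nN by simp
  have sumw: "(\<Sum>r\<in>{1..R}. \<Sum>t\<in>Om r. w r) = 1"
  proof -
    have "(\<Sum>r\<in>{1..R}. \<Sum>t\<in>Om r. w r) = (\<Sum>r\<in>{1..R}. real (Nr r) / real N)"
    proof (rule sum.cong[OF refl])
      fix r assume r: "r \<in> {1..R}"
      have "(\<Sum>t\<in>Om r. w r) = real (card (Om r)) * w r" by simp
      also have "\<dots> = real (Nr r) / real N" unfolding w_def using cOmpos[OF r] by simp
      finally show "(\<Sum>t\<in>Om r. w r) = real (Nr r) / real N" .
    qed
    also have "\<dots> = (\<Sum>r\<in>{1..R}. real (Nr r)) / real N" by (simp add: sum_divide_distrib)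
    also have "\<dots> = 1" using sumNr Npos by simp
    finally show ?thesis .
  qed
  have pt: "w r - W r t / M \<le> \<delta> r / real (card (Om r))" if r: "r \<in> {1..R}" and t: "t \<in> Om r" for r t
  proof -
    define K0 where "K0 = (N - 2 - k) choose (n - 2)"
    define K1 where "K1 = (N - 3 - k) choose (n - 3)"
    define ff1 where "ff1 = \<Prod>{N - n - k + 1..N - n}"
    define x where "x = real (Nr r)"
    define m where "m = real N - real k - 2"
    define E' where "E' = 2 + (x - 2) * (real n - 2) / m"
    have t': "t \<in> Omega_r N k Y r" using t unfolding Om_def .
    have ks: "W r t \<ge> real K0 / (real n * real ff1 * (2 + (x - 2) * real K1 / real K0))"
      unfolding W_def K0_def K1_def ff1_def x_def Nr_def by (rule key_sum[OF Ylab r t' nN kn n3])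
    have nk: "n + k \<le> N" using kn nN by linarith
    have br: "real K1 * real (N - 2 - k) = real K0 * real (n - 2)"
      unfolding K0_def K1_def by (rule binom_ratio[OF n3 nk])
    have K0pos: "K0 > 0" unfolding K0_def using nk n3 by simp
    have mpos: "m > 0" unfolding m_def using N2k by simp
    have mr: "real (N - 2 - k) = m" unfolding m_def using N2k by (simp add: of_nat_diff)
    have nr: "real (n - 2) = real n - 2" using n3 by (simp add: of_nat_diff)
    have x2: "x \<ge> 2" unfolding x_def using Nr2[OF r] by simp
    have br': "real K1 * m = (real n - 2) * real K0" using br unfolding mr nr by (simp add: mult.commute)
    have kr: "real K1 / real K0 = (real n - 2) / m"
    proof -
      have "real K0 \<noteq> 0" "m \<noteq> 0" using K0pos mpos by auto
      then show ?thesis using br' by (simp add: frac_eq_eq)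
    qed
    have Eeq: "2 + (x - 2) * real K1 / real K0 = E'"
    proof -
      have "(x - 2) * real K1 / real K0 = (x - 2) * (real K1 / real K0)" by simp
      also have "\<dots> = (x - 2) * ((real n - 2) / m)" using kr by simp
      also have "\<dots> = (x - 2) * (real n - 2) / m" by simp
      finally show ?thesis unfolding E'_def by simp
    qed
    have Epos: "E' > 0"
    proof -
      have "(x - 2) * (real n - 2) / m \<ge> 0" using x2 n3 mpos by simp
      then show ?thesis unfolding E'_def by linarith
    qed
    have ff1pos: "ff1 > 0" unfolding ff1_def by (rule prod_pos) auto
    have WM: "W r t / M \<ge> (real n - 1) / (real N * (real N - 1) * real ff2) / E'"
    proof -
      have "W r t / M \<ge> (real K0 / (real n * real ff1 * E')) / M"
        by (rule divide_right_mono) (use ks Eeq Mpos in auto)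
      also have "(real K0 / (real n * real ff1 * E')) / M = (real K0 / (M * real n * real ff1)) / E'"
        by (simp add: field_simps)
      also have "real K0 / (M * real n * real ff1) = (real n - 1) / (real N * (real N - 1) * real ff2)"
        unfolding K0_def M_def ff1_def ff2_def by (rule K0_identity) (use n3 nk in auto)
      finally show ?thesis .
    qed
    define L where "L = (real n - 1) / (real N * (real N - 1) * real ff2) / E'"
    have Lpos: "L \<ge> 0" unfolding L_def using n3 N2k Epos by simp
    define c where "c = real (card (Om r))"
    have cpos: "c > 0" unfolding c_def using cOmpos[OF r] by simp
    have cge: "c \<ge> x * (x - 1) * real ff2"
    proof -
      have "real (Nr r * (Nr r - 1) * ff2) \<le> c" unfolding c_def using cOm[OF r] by (simp only: of_nat_le_iff)
      moreover have e1: "real (Nr r - 1) = x - 1" unfolding x_def using Nr2[OF r] by (simp add: of_nat_diff)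
      moreover have "real (Nr r * (Nr r - 1) * ff2) = x * (x - 1) * real ff2"
        unfolding of_nat_mult e1 x_def ..
      ultimately show ?thesis by linarith
    qed
    have "w r - W r t / M \<le> x / real N / c - L" unfolding w_def x_def c_def L_def using WM by simp
    also have "x / real N / c - L = (x / real N - L * c) / c" using cpos by (simp add: field_simps)
    also have "\<dots> \<le> (x / real N - L * (x * (x - 1) * real ff2)) / c"
      by (rule divide_right_mono) (use cge Lpos cpos in \<open>auto intro: mult_left_mono\<close>)
    also have "L * (x * (x - 1) * real ff2) = x * (x - 1) * (real n - 1) / (real N * (real N - 1) * E')"
    proof -
      have "real N \<noteq> 0" "real N - 1 \<noteq> 0" "E' \<noteq> 0" "real ff2 \<noteq> 0" using N2k Epos ff2pos by auto
      then show ?thesis unfolding L_def by (simp add: field_simps)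
    qed
    also have "x / real N - x * (x - 1) * (real n - 1) / (real N * (real N - 1) * E')
        \<le> 2 / (real n - real R) + (x / real N) * (real k + 1) / m"
      unfolding E'_def by (rule P_ineq) (use x2 nN nR R2 m_def mpos n3 n_def in auto)
    also have "2 / (real n - real R) + (x / real N) * (real k + 1) / m = \<delta> r"
      unfolding \<delta>_def C_def x_def m_def by (simp add: field_simps)
    finally show ?thesis unfolding c_def by (simp add: divide_right_mono)
  qed
  have delta0: "\<delta> r \<ge> 0" for r
  proof -
    have "real n - real R > 0" using nR n_def by simp
    moreover have "real N - real k - 2 > 0" using N2k by simp
    ultimately show ?thesis unfolding \<delta>_def C_def by (intro add_nonneg_nonneg divide_nonneg_nonneg mult_nonneg_nonneg) auto
  qed
  define a where "a r t = w r - W r t / M" for r t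
  have sum_delta: "(\<Sum>r\<in>{1..R}. \<Sum>t\<in>Om r. B * (\<delta> r / real (card (Om r)))) = B * (\<Sum>r\<in>{1..R}. \<delta> r)"
  proof -
    have "(\<Sum>r\<in>{1..R}. \<Sum>t\<in>Om r. B * (\<delta> r / real (card (Om r)))) = (\<Sum>r\<in>{1..R}. B * \<delta> r)"
    proof (rule sum.cong[OF refl])
      fix r assume r: "r \<in> {1..R}"
      show "(\<Sum>t\<in>Om r. B * (\<delta> r / real (card (Om r)))) = B * \<delta> r" using cOmpos[OF r] by simp
    qed
    then show ?thesis by (simp add: sum_distrib_left)
  qed
  have S1: "(\<Sum>r\<in>{1..R}. \<Sum>t\<in>Om r. h t * a r t) \<le> B * (\<Sum>r\<in>{1..R}. \<delta> r)"
  proof -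
    have "(\<Sum>r\<in>{1..R}. \<Sum>t\<in>Om r. h t * a r t) \<le> (\<Sum>r\<in>{1..R}. \<Sum>t\<in>Om r. B * (\<delta> r / real (card (Om r))))"
    proof (intro sum_mono)
      fix r t assume r: "r \<in> {1..R}" and t: "t \<in> Om r"
      have p: "a r t \<le> \<delta> r / real (card (Om r))" using pt[OF r t] unfolding a_def .
      have d: "\<delta> r / real (card (Om r)) \<ge> 0" using delta0 by simp
      show "h t * a r t \<le> B * (\<delta> r / real (card (Om r)))"
      proof (cases "a r t \<ge> 0")
        case True
        have "h t * a r t \<le> B * a r t" using hb[OF t] True by (intro mult_right_mono) auto
        also have "\<dots> \<le> B * (\<delta> r / real (card (Om r)))" using p B0 by (intro mult_left_mono) auto
        finally show ?thesis .
      next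
        case False
        then have "h t * a r t \<le> 0" using hb[OF t] by (simp add: mult_nonneg_nonpos)
        also have "0 \<le> B * (\<delta> r / real (card (Om r)))" using B0 d by (rule mult_nonneg_nonneg)
        finally show ?thesis .
      qed
    qed
    then show ?thesis using sum_delta by simp
  qed
  have S2: "(\<Sum>r\<in>{1..R}. \<Sum>t\<in>Om r. (B - h t) * a r t) \<le> B * (\<Sum>r\<in>{1..R}. \<delta> r)"
  proof -
    have "(\<Sum>r\<in>{1..R}. \<Sum>t\<in>Om r. (B - h t) * a r t) \<le> (\<Sum>r\<in>{1..R}. \<Sum>t\<in>Om r. B * (\<delta> r / real (card (Om r))))"
    proof (intro sum_mono)
      fix r t assume r: "r \<in> {1..R}" and t: "t \<in> Om r"
      have p: "a r t \<le> \<delta> r / real (card (Om r))" using pt[OF r t] unfolding a_def .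
      have d: "\<delta> r / real (card (Om r)) \<ge> 0" using delta0 by simp
      show "(B - h t) * a r t \<le> B * (\<delta> r / real (card (Om r)))"
      proof (cases "a r t \<ge> 0")
        case True
        have "(B - h t) * a r t \<le> B * a r t" using hb[OF t] True by (intro mult_right_mono) auto
        also have "\<dots> \<le> B * (\<delta> r / real (card (Om r)))" using p B0 by (intro mult_left_mono) auto
        finally show ?thesis .
      next
        case False
        then have "(B - h t) * a r t \<le> 0" using hb[OF t] by (simp add: mult_nonneg_nonpos)
        also have "0 \<le> B * (\<delta> r / real (card (Om r)))" using B0 d by (rule mult_nonneg_nonneg)
        finally show ?thesis .
      qed
    qed
    then show ?thesis using sum_delta by simp
  qed
  have diffU: "U_Omega N R k Y X \<phi> f - U_bar N R k Y X \<phi> f = (\<Sum>r\<in>{1..R}. \<Sum>t\<in>Om r. h t * a r t)"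
    unfolding Uf Ubf a_def by (simp add: sum_subtractf[symmetric] right_diff_distrib)
  have suma: "(\<Sum>r\<in>{1..R}. \<Sum>t\<in>Om r. a r t) \<ge> 0"
  proof -
    have "(\<Sum>r\<in>{1..R}. \<Sum>t\<in>Om r. a r t) = (\<Sum>r\<in>{1..R}. \<Sum>t\<in>Om r. w r) - (\<Sum>r\<in>{1..R}. \<Sum>t\<in>Om r. W r t) / M"
      unfolding a_def by (simp add: sum_subtractf sum_divide_distrib)
    also have "\<dots> \<ge> 0" using sumw sumW Mpos by (simp add: field_simps)
    finally show ?thesis .
  qed
  have BS: "(\<Sum>r\<in>{1..R}. \<Sum>t\<in>Om r. (B - h t) * a r t)
      = B * (\<Sum>r\<in>{1..R}. \<Sum>t\<in>Om r. a r t) - (\<Sum>r\<in>{1..R}. \<Sum>t\<in>Om r. h t * a r t)"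
    by (simp add: left_diff_distrib sum_subtractf sum_distrib_left)
  have Ba: "B * (\<Sum>r\<in>{1..R}. \<Sum>t\<in>Om r. a r t) \<ge> 0" using B0 suma by simp
  have absb: "\<bar>U_Omega N R k Y X \<phi> f - U_bar N R k Y X \<phi> f\<bar> \<le> B * (\<Sum>r\<in>{1..R}. \<delta> r)"
    using S1 S2 diffU BS Ba by linarith
  have sumdelta: "(\<Sum>r\<in>{1..R}. \<delta> r) = 2 * real R / (real n - real R) + (real k + 1) / (real N - real k - 2)"
  proof -
    have "(\<Sum>r\<in>{1..R}. \<delta> r) = (\<Sum>r\<in>{1..R}. 2 / (real n - real R)) + (\<Sum>r\<in>{1..R}. real (Nr r) * C)"
      unfolding \<delta>_def by (rule sum.distrib)
    also have "(\<Sum>r\<in>{1..R}. real (Nr r) * C) = (\<Sum>r\<in>{1..R}. real (Nr r)) * C"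
      by (rule sum_distrib_right[symmetric])
    also have "(\<Sum>r\<in>{1..R}. 2 / (real n - real R)) = real R * (2 / (real n - real R))" by simp
    also have "(\<Sum>r\<in>{1..R}. real (Nr r)) * C = (real k + 1) / (real N - real k - 2)"
      unfolding sumNr C_def using Npos by simp
    finally show ?thesis by simp
  qed
  have fin: "B * (2 * real R / (real n - real R) + (real k + 1) / (real N - real k - 2))
      \<le> 2 * B * real R / (real n - real R) + 6 * B * real R * real k / real N + 2 * B * real k / (real N - real k - 1)"
    by (rule final_arith) (use B0 R2 k1 N2k in auto)
  show "\<bar>U_Omega N R k Y X \<phi> f - U_bar N R k Y X \<phi> f\<bar>
           \<le> 2 * B * R / (real (aux_n N k) - R) + 6 * B * R * k / N
              + 2 * B * k / (real N - k - 1)"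
    using absb sumdelta fin unfolding n_def by simp
qed

end
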